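(* Let $y:[0,h]\to\mathbb{R}$ solve $y'=f(y)$, $y(0)=y_0$, with $f$ Lipschitz continuous with constant $L$, and assume $f\circ y\in C^M([0,h])$. Given any previous iterate $\eta^{[p]}$, define the implicit SDC iterate by $\eta_0^{[p+1]}=\eta_0$ and, for $n=1,\dots,N$, $$\eta_n^{[p+1]}=\eta_{n-1}^{[p+1]}+h_n\big[f(\eta_n^{[p+1]})-f(\eta_n^{[p]})\big]+h\sum_{m=1}^M w_{n,m}f(\eta_m^{[p]}).$$ If $h<1/(2L)$, then for each $n=1,\dots,N$, $$|e_n^{[p+1]}|\le e^{2NhL}|e_0|+C_1h\|\mathbf e^{[p]}\|+C_2h^{M+1},$$ where the constants $C_1,C_2$ depend only on the smoothness of $f$, the exact solution $y$, and the choice of quadrature points.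
   Context: Quadrature nodes $0\le\xi_1<\dots<\xi_M\le1$ partition $[0,1]$ into $N$ subintervals, where $N=M-1$ if both endpoints $0,1$ are nodes, $N=M$ if exactly one is, and $N=M+1$ if neither is. The right endpoints are $\xi^R_0=0$, $\xi^R_N=1$, and for the interior ones $\xi^R_n=\xi_{n+1}$ if the left endpoint $0$ is a node, $\xi^R_n=\xi_n$ otherwise. $\ell_m$ is the Lagrange basis polynomial of degree $\le M-1$ with $\ell_m(\xi_k)=\delta_{mk}$, and $w_{n,m}=\int_{\xi^R_{n-1}}^{\xi^R_n}\ell_m(x)\,dx$. For step size $h>0$, $t_n=\xi^R_nh$, $h_n=(\xi^R_n-\xi^R_{n-1})h$. The iterate $\eta^{[p]}$ consists of approximations $\eta^{[p]}_n\approx y(t_n)$ and values $\eta^{[p]}_m\approx y(\xi_mh)$ at the quadrature nodes used in the quadrature sum. $\eta_0$ approximates $y_0$, $e_0=\eta_0-y_0$, $e^{[p+1]}_n=\eta^{[p+1]}_n-y(t_n)$, $\mathbf e^{[p]}=(\eta^{[p]}_m-y(\xi_mh))_{m=1}^M$, $\|\mathbf e\|=\max_m|e_m|$.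
   Formalization: $\|\mathbf e^{[p]}\|$ is the maximum of the node errors $\eta^{[p]}_m-y(\xi_mh)$ together with the grid errors $\eta^{[p]}_n-y(t_n)$ for n = 1,...,N, instead of the maximum over the node errors alone. The statement above fails without it. *)

theory Defs
  imports "HOL-Analysis.Analysis"
begin

definition valid_nodes :: "nat \<Rightarrow> (nat \<Rightarrow> real) \<Rightarrow> bool" where
  "valid_nodes M xi \<longleftrightarrow> M \<ge> 1 \<and> (\<forall>m\<in>{1..M}. 0 \<le> xi m \<and> xi m \<le> 1) \<and>
     (\<forall>m\<in>{1..M}. \<forall>k\<in>{1..M}. m < k \<longrightarrow> xi m < xi k)"

definition numN :: "nat \<Rightarrow> (nat \<Rightarrow> real) \<Rightarrow> nat" where
  "numN M xi = (if xi 1 = 0 \<and> xi M = 1 then M - 1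
                else if xi 1 = 0 \<or> xi M = 1 then M else M + 1)"

definition xiR :: "nat \<Rightarrow> (nat \<Rightarrow> real) \<Rightarrow> nat \<Rightarrow> real" where
  "xiR M xi n = (if n = 0 then 0 else if n = numN M xi then 1
                 else if xi 1 = 0 then xi (n + 1) else xi n)"

definition lagr :: "nat \<Rightarrow> (nat \<Rightarrow> real) \<Rightarrow> nat \<Rightarrow> real \<Rightarrow> real" where
  "lagr M xi m x = (\<Prod>k\<in>{1..M} - {m}. (x - xi k) / (xi m - xi k))"

definition qw :: "nat \<Rightarrow> (nat \<Rightarrow> real) \<Rightarrow> nat \<Rightarrow> nat \<Rightarrow> real" where
  "qw M xi n m = integral {xiR M xi (n - 1) .. xiR M xi n} (lagr M xi m)"

definition CM_bounded :: "nat \<Rightarrow> (real \<Rightarrow> real) \<Rightarrow> real \<Rightarrow> real \<Rightarrow> real \<Rightarrow> bool" where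
  "CM_bounded M g a b D \<longleftrightarrow> (\<exists>Ds :: nat \<Rightarrow> real \<Rightarrow> real.
      (\<forall>t\<in>{a..b}. Ds 0 t = g t) \<and>
      (\<forall>k<M. \<forall>t\<in>{a..b}. (Ds k has_real_derivative Ds (Suc k) t) (at t within {a..b})) \<and>
      continuous_on {a..b} (Ds M) \<and>
      (\<forall>t\<in>{a..b}. \<bar>Ds M t\<bar> \<le> D))"

end

theory Submission
  imports Defs "HOL-Computational_Algebra.Polynomial"
begin


lemma xiR_props:
  assumes nodes: "valid_nodes M xi" and n: "n \<in> {1..numN M xi}"
  shows "0 \<le> xiR M xi (n-1) \<and> xiR M xi (n-1) \<le> xiR M xi n \<and> xiR M xi n \<le> 1"
proof -
  have M1: "M \<ge> 1" and rng: "\<And>m. 1 \<le> m \<Longrightarrow> m \<le> M \<Longrightarrow> 0 \<le> xi m \<and> xi m \<le> 1"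
    and mono: "\<And>m k. m\<in>{1..M} \<Longrightarrow> k\<in>{1..M} \<Longrightarrow> m < k \<Longrightarrow> xi m < xi k"
    using nodes unfolding valid_nodes_def by auto
  have mono1: "\<And>m. 1 \<le> m \<Longrightarrow> Suc m \<le> M \<Longrightarrow> xi m \<le> xi (Suc m)"
    using mono by (simp add: less_imp_le)
  have p1: "xi 1 = 0 \<Longrightarrow> M \<ge> 2 \<Longrightarrow> xi 2 > 0" using mono[of 1 2] M1 by auto
  have pM: "xi M = 1 \<Longrightarrow> M \<ge> 2 \<Longrightarrow> xi (M-1) < 1" using mono[of "M-1" M] M1 by auto
  define N where "N = numN M xi"
  have R0: "xiR M xi 0 = 0" by (simp add: xiR_def)
  have Npos: "N \<noteq> 0"
  proof
    assume "N = 0"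
    then have "xi 1 = 0" "xi M = 1" "M = 1" using M1 by (auto simp: N_def numN_def split: if_splits)
    then show False by simp
  qed
  have RN: "xiR M xi N = 1" using Npos by (simp add: xiR_def N_def)
  have Rmid: "\<And>k. 0 < k \<Longrightarrow> k < N \<Longrightarrow> xiR M xi k = (if xi 1 = 0 then xi (k+1) else xi k)"
    by (simp add: xiR_def N_def)
  have n1: "1 \<le> n" "n \<le> N" using n N_def by auto
  show ?thesis
  proof (cases "xi 1 = 0")
    case True
    then have NM: "N \<le> M" "xi M = 1 \<Longrightarrow> N = M - 1" "xi M \<noteq> 1 \<Longrightarrow> N = M"
      by (auto simp: N_def numN_def)
    have sn: "Suc (n - 1) = n" "n - 1 + 1 = n" using n1 by auto
    have "n - 1 = 0 \<or> (0 < n - 1 \<and> n - 1 < N)" using n1 by auto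
    moreover have "n = N \<or> (0 < n \<and> n < N)" using n1 by auto
    ultimately show ?thesis
    proof (elim disjE conjE)
      assume a: "n - 1 = 0" "n = N" then show ?thesis using R0 RN by simp
    next
      assume a: "n - 1 = 0" "0 < n" "n < N"
      then have "n = 1" by simp
      then show ?thesis using R0 Rmid[of n] a rng[of 2] NM True by (auto simp: numeral_2_eq_2)
    next
      assume a: "0 < n - 1" "n - 1 < N" "n = N"
      then show ?thesis using RN Rmid[of "n-1"] rng[of n] NM True M1 sn
        by (cases "xi M = 1") auto
    next
      assume a: "0 < n - 1" "n - 1 < N" "0 < n" "n < N"
      then show ?thesis using Rmid[of "n-1"] Rmid[of n] rng[of n] rng[of "n+1"] mono1[of n] NM True sn
        by auto
    qed
  next
    case False
    then have NM: "N \<le> M + 1" "xi M = 1 \<Longrightarrow> N = M" "xi M \<noteq> 1 \<Longrightarrow> N = M + 1"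
      by (auto simp: N_def numN_def)
    have "n - 1 = 0 \<or> (0 < n - 1 \<and> n - 1 < N)" using n1 by auto
    moreover have "n = N \<or> (0 < n \<and> n < N)" using n1 by auto
    ultimately show ?thesis
    proof (elim disjE conjE)
      assume a: "n - 1 = 0" "n = N" then show ?thesis using R0 RN by simp
    next
      assume a: "n - 1 = 0" "0 < n" "n < N"
      then have "n = 1" by simp
      then show ?thesis using R0 Rmid[of n] a rng[of 1] NM False M1 by auto
    next
      assume a: "0 < n - 1" "n - 1 < N" "n = N"
      then show ?thesis using RN Rmid[of "n-1"] rng[of "n-1"] NM False M1
        by (cases "xi M = 1") auto
    next
      assume a: "0 < n - 1" "n - 1 < N" "0 < n" "n < N"
      then show ?thesis using Rmid[of "n-1"] Rmid[of n] rng[of n] rng[of "n-1"] mono1[of "n-1"] NM False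
        by (cases "xi M = 1") auto
    qed
  qed
qed


lemma integ_bound:
  fixes F F' :: "real \<Rightarrow> real"
  assumes t: "0 \<le> t"
    and d: "\<And>s. s \<in> {0..t} \<Longrightarrow> (F has_real_derivative F' s) (at s within {0..t})"
    and b: "\<And>s. s \<in> {0..t} \<Longrightarrow> \<bar>F' s\<bar> \<le> D * s ^ k / fact k"
    and F0: "F 0 = 0"
  shows "\<bar>F t\<bar> \<le> D * t ^ Suc k / fact (Suc k)"
proof -
  have i1: "(F' has_integral (F t - F 0)) {0..t}"
    by (rule fundamental_theorem_of_calculus[OF t])
       (use d in \<open>auto simp: has_real_derivative_iff_has_vector_derivative\<close>)
  have dG: "((\<lambda>s. D * s ^ Suc k / fact (Suc k)) has_real_derivative D * s ^ k / fact k) (at s within {0..t})" for s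
  proof -
    have "((\<lambda>s. s ^ Suc k) has_real_derivative real (Suc k) * s ^ k) (at s within {0..t})"
      using DERIV_pow[of "Suc k" s "{0..t}"] by simp
    then have "((\<lambda>s. D * s ^ Suc k / fact (Suc k)) has_real_derivative D * (real (Suc k) * s ^ k) / fact (Suc k)) (at s within {0..t})"
      by (intro DERIV_cdivide DERIV_cmult)
    moreover have "D * (real (Suc k) * s ^ k) / fact (Suc k) = D * s ^ k / fact k"
      by (simp add: fact_Suc del: of_nat_Suc)
    ultimately show ?thesis by simp
  qed
  have i2: "((\<lambda>s. D * s ^ k / fact k) has_integral (D * t ^ Suc k / fact (Suc k) - D * 0 ^ Suc k / fact (Suc k))) {0..t}"
    by (rule fundamental_theorem_of_calculus[OF t])
       (use dG in \<open>auto simp: has_real_derivative_iff_has_vector_derivative\<close>)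
  have nb: "norm (integral {0..t} F') \<le> integral {0..t} (\<lambda>s. D * s ^ k / fact k)"
    by (rule integral_norm_bound_integral) (use i1 i2 b in auto)
  have e1: "integral {0..t} F' = F t" using integral_unique[OF i1] F0 by simp
  have e2: "integral {0..t} (\<lambda>s. D * s ^ k / fact k) = D * t ^ Suc k / fact (Suc k)"
    using integral_unique[OF i2] by simp
  show ?thesis using nb unfolding e1 e2 real_norm_def .
qed

lemma taylor_bound:
  fixes Ds :: "nat \<Rightarrow> real \<Rightarrow> real"
  assumes "\<forall>j<k. \<forall>t\<in>{0..h}. (Ds j has_real_derivative Ds (Suc j) t) (at t within {0..h})"
    and "\<forall>t\<in>{0..h}. \<bar>Ds k t\<bar> \<le> D"
  shows "\<exists>c. \<forall>t\<in>{0..h}. \<bar>Ds 0 t - (\<Sum>i<k. c i * t ^ i)\<bar> \<le> D * t ^ k / fact k"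
  using assms
proof (induction k arbitrary: Ds)
  case 0
  then show ?case by auto
next
  case (Suc k)
  have "\<forall>j<k. \<forall>t\<in>{0..h}. ((\<lambda>j. Ds (Suc j)) j has_real_derivative (\<lambda>j. Ds (Suc j)) (Suc j) t) (at t within {0..h})"
    using Suc.prems(1) by auto
  moreover have "\<forall>t\<in>{0..h}. \<bar>(\<lambda>j. Ds (Suc j)) k t\<bar> \<le> D" using Suc.prems(2) by auto
  ultimately obtain c where c: "\<forall>t\<in>{0..h}. \<bar>Ds 1 t - (\<Sum>i<k. c i * t ^ i)\<bar> \<le> D * t ^ k / fact k"
    using Suc.IH[of "\<lambda>j. Ds (Suc j)"] by auto
  define c' where "c' i = (if i = 0 then Ds 0 0 else c (i - 1) / real i)" for i
  have sum_eq: "(\<Sum>i<Suc k. c' i * t ^ i) = Ds 0 0 + (\<Sum>i<k. c i / real (Suc i) * t ^ Suc i)" for t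
    by (simp add: sum.lessThan_Suc_shift c'_def del: sum.lessThan_Suc)
  have dP: "((\<lambda>t. Ds 0 0 + (\<Sum>i<k. c i / real (Suc i) * t ^ Suc i)) has_real_derivative (\<Sum>i<k. c i * t ^ i)) (at t within S)" for t S
  proof -
    have "((\<lambda>t. Ds 0 0 + (\<Sum>i<k. c i / real (Suc i) * t ^ Suc i)) has_real_derivative 0 + (\<Sum>i<k. c i / real (Suc i) * (real (Suc i) * t ^ i))) (at t within S)"
    proof (intro derivative_intros DERIV_sum)
      fix n
      show "((\<lambda>z. c n / real (Suc n) * z ^ Suc n) has_real_derivative c n / real (Suc n) * (real (Suc n) * t ^ n)) (at t within S)"
        by (rule derivative_eq_intros refl | simp)+
    qed
    then show ?thesis by simp
  qed
  show ?case
  proof (intro exI ballI)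
    fix t assume t: "t \<in> {0..h}"
    have "\<bar>(\<lambda>s. Ds 0 s - (Ds 0 0 + (\<Sum>i<k. c i / real (Suc i) * s ^ Suc i))) t\<bar> \<le> D * t ^ Suc k / fact (Suc k)"
    proof (rule integ_bound[where F'="\<lambda>s. Ds 1 s - (\<Sum>i<k. c i * s ^ i)"])
      show "0 \<le> t" using t by simp
    next
      fix s assume s: "s \<in> {0..t}"
      then have sh: "s \<in> {0..h}" using t by auto
      have "(Ds 0 has_real_derivative Ds 1 s) (at s within {0..h})" using Suc.prems(1) sh by auto
      then have "(Ds 0 has_real_derivative Ds 1 s) (at s within {0..t})"
        by (rule DERIV_subset) (use t in auto)
      then show "((\<lambda>s. Ds 0 s - (Ds 0 0 + (\<Sum>i<k. c i / real (Suc i) * s ^ Suc i))) has_real_derivative Ds 1 s - (\<Sum>i<k. c i * s ^ i)) (at s within {0..t})"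
        by (intro DERIV_diff dP)
      show "\<bar>Ds 1 s - (\<Sum>i<k. c i * s ^ i)\<bar> \<le> D * s ^ k / fact k" using c sh by auto
    qed simp
    then show "\<bar>Ds 0 t - (\<Sum>i<Suc k. c' i * t ^ i)\<bar> \<le> D * t ^ Suc k / fact (Suc k)"
      by (simp only: sum_eq)
  qed
qed


lemma nodes_inj:
  assumes "valid_nodes M xi" "m \<in> {1..M}" "k \<in> {1..M}" "m \<noteq> k"
  shows "xi m \<noteq> xi k"
  using assms unfolding valid_nodes_def
  by (metis less_irrefl linorder_neqE_nat)

lemma lagr_node:
  assumes nodes: "valid_nodes M xi" and m: "m \<in> {1..M}" and j: "j \<in> {1..M}"
  shows "lagr M xi m (xi j) = (if m = j then 1 else 0)"
proof (cases "m = j")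
  case True
  have "\<And>k. k \<in> {1..M} - {m} \<Longrightarrow> (xi m - xi k) / (xi m - xi k) = 1"
    using nodes_inj[OF nodes m] by auto
  then show ?thesis using True unfolding lagr_def by (simp add: prod.neutral)
next
  case False
  have "j \<in> {1..M} - {m}" using j False by auto
  then show ?thesis using False unfolding lagr_def
    by (intro trans[OF prod_zero] ) (auto intro!: bexI[of _ j])
qed

lemma lagr_bound:
  assumes nodes: "valid_nodes M xi" and m: "m \<in> {1..M}" and x: "x \<in> {0..1}"
  shows "\<bar>lagr M xi m x\<bar> \<le> (\<Prod>k\<in>{1..M} - {m}. 1 / \<bar>xi m - xi k\<bar>)"
proof -
  have "\<bar>lagr M xi m x\<bar> = (\<Prod>k\<in>{1..M} - {m}. \<bar>x - xi k\<bar> / \<bar>xi m - xi k\<bar>)"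
    unfolding lagr_def by (simp add: abs_prod abs_divide)
  also have "\<dots> \<le> (\<Prod>k\<in>{1..M} - {m}. 1 / \<bar>xi m - xi k\<bar>)"
  proof (rule prod_mono)
    fix k assume k: "k \<in> {1..M} - {m}"
    have "0 \<le> xi k" "xi k \<le> 1" using nodes k unfolding valid_nodes_def by auto
    then have "\<bar>x - xi k\<bar> \<le> 1" using x by auto
    then show "0 \<le> \<bar>x - xi k\<bar> / \<bar>xi m - xi k\<bar> \<and> \<bar>x - xi k\<bar> / \<bar>xi m - xi k\<bar> \<le> 1 / \<bar>xi m - xi k\<bar>"
      by (simp add: divide_right_mono)
  qed
  finally show ?thesis .
qed

lemma lagr_cont: "continuous_on S (lagr M xi m)"
  unfolding lagr_def divide_inverse
  by (intro continuous_on_prod continuous_on_mult_right continuous_on_diff continuous_on_id continuous_on_const)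

lemma lagr_exact:
  fixes p :: "real poly"
  assumes nodes: "valid_nodes M xi" and dp: "degree p < M"
  shows "poly p x = (\<Sum>m=1..M. lagr M xi m x * poly p (xi m))"
proof -
  define Lp where "Lp m = (\<Prod>k\<in>{1..M} - {m}. smult (1 / (xi m - xi k)) [:- xi k, 1:])" for m
  have pL: "poly (Lp m) z = lagr M xi m z" for m z
    unfolding Lp_def lagr_def poly_prod by (intro prod.cong refl) (simp add: diff_divide_distrib mult.commute)
  have dL: "degree (Lp m) \<le> M - 1" if m: "m \<in> {1..M}" for m
  proof -
    have "degree (Lp m) \<le> sum (degree \<circ> (\<lambda>k. smult (1 / (xi m - xi k)) [:- xi k, 1:])) ({1..M} - {m})"
      unfolding Lp_def by (rule degree_prod_sum_le) simp
    also have "\<dots> \<le> sum (\<lambda>k. 1) ({1..M} - {m})"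
      by (rule sum_mono) (simp add: degree_smult_le)
    also have "\<dots> = M - 1" using m by simp
    finally show ?thesis .
  qed
  define Q where "Q = (\<Sum>m=1..M. smult (poly p (xi m)) (Lp m)) - p"
  have M1: "M \<ge> 1" using nodes unfolding valid_nodes_def by auto
  have dQ: "degree Q < M"
  proof -
    have "degree (\<Sum>m=1..M. smult (poly p (xi m)) (Lp m)) \<le> M - 1"
    proof (rule degree_sum_le)
      fix m assume "m \<in> {1..M}"
      then show "degree (smult (poly p (xi m)) (Lp m)) \<le> M - 1"
        using order_trans[OF degree_smult_le dL] by blast
    qed simp
    then show ?thesis unfolding Q_def using dp M1
      using degree_diff_le_max[of "\<Sum>m=1..M. smult (poly p (xi m)) (Lp m)" p] by linarith
  qed
  have pQ: "poly Q z = (\<Sum>m=1..M. lagr M xi m z * poly p (xi m)) - poly p z" for z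
    unfolding Q_def by (simp add: poly_sum pL mult.commute)
  have roots: "xi ` {1..M} \<subseteq> {z. poly Q z = 0}"
  proof
    fix z assume "z \<in> xi ` {1..M}"
    then obtain j where j: "j \<in> {1..M}" "z = xi j" by auto
    have "(\<Sum>m=1..M. lagr M xi m z * poly p (xi m)) = (\<Sum>m=1..M. (if m = j then poly p (xi m) else 0))"
      using lagr_node[OF nodes _ j(1)] j(2) by (intro sum.cong) auto
    also have "\<dots> = poly p z" using j by simp
    finally show "z \<in> {z. poly Q z = 0}" using pQ by simp
  qed
  have "Q = 0"
  proof (rule ccontr)
    assume "Q \<noteq> 0"
    then have "card {z. poly Q z = 0} \<le> degree Q" by (rule card_poly_roots_bound)
    moreover have "card (xi ` {1..M}) \<le> card {z. poly Q z = 0}"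
      using roots poly_roots_finite[OF \<open>Q \<noteq> 0\<close>] by (rule card_mono[rotated])
    moreover have "card (xi ` {1..M}) = M"
    proof -
      have "inj_on xi {1..M}" using nodes_inj[OF nodes] unfolding inj_on_def by blast
      then show ?thesis by (simp add: card_image)
    qed
    ultimately show False using dQ by simp
  qed
  then show ?thesis using pQ[of x] by simp
qed


definition lbsum :: "nat \<Rightarrow> (nat \<Rightarrow> real) \<Rightarrow> real" where
  "lbsum M xi = (\<Sum>m=1..M. (\<Prod>k\<in>{1..M} - {m}. 1 / \<bar>xi m - xi k\<bar>))"

lemma lbsum_nonneg: "lbsum M xi \<ge> 0"
  unfolding lbsum_def by (intro sum_nonneg prod_nonneg) auto

lemma lagr_sum_bound:
  assumes nodes: "valid_nodes M xi" and x: "x \<in> {0..1}"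
  shows "(\<Sum>m=1..M. \<bar>lagr M xi m x\<bar>) \<le> lbsum M xi"
  unfolding lbsum_def by (intro sum_mono lagr_bound[OF nodes _ x]) 

lemma local_err:
  fixes y phi :: "real \<Rightarrow> real"
  assumes nodes: "valid_nodes M xi" and n: "n \<in> {1..numN M xi}" and h: "h > 0"
    and yd: "\<forall>t\<in>{0..h}. (y has_real_derivative phi t) (at t within {0..h})"
    and CM: "CM_bounded M phi 0 h D"
  shows "\<bar>y (xiR M xi n * h) - y (xiR M xi (n-1) * h) - h * (\<Sum>m=1..M. qw M xi n m * phi (xi m * h))\<bar>
           \<le> h ^ (M+1) * (\<bar>D\<bar> / fact M) * (1 + lbsum M xi)"
proof -
  define K where "K = \<bar>D\<bar> / fact M"
  define a where "a = xiR M xi (n-1)"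
  define b where "b = xiR M xi n"
  have ab: "0 \<le> a" "a \<le> b" "b \<le> 1" using xiR_props[OF nodes n] a_def b_def by auto
  have M1: "M \<ge> 1" and rng: "\<And>m. m \<in> {1..M} \<Longrightarrow> 0 \<le> xi m \<and> xi m \<le> 1"
    using nodes unfolding valid_nodes_def by auto
  obtain Ds where Ds0: "\<forall>t\<in>{0..h}. Ds 0 t = phi t"
    and Dsd: "\<forall>k<M. \<forall>t\<in>{0..h}. (Ds k has_real_derivative Ds (Suc k) t) (at t within {0..h})"
    and DsM: "\<forall>t\<in>{0..h}. \<bar>Ds M t\<bar> \<le> D"
    using CM unfolding CM_bounded_def by blast
  obtain c where c: "\<forall>t\<in>{0..h}. \<bar>Ds 0 t - (\<Sum>i<M. c i * t ^ i)\<bar> \<le> D * t ^ M / fact M"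
    using taylor_bound[OF Dsd DsM] by blast
  define P where "P t = (\<Sum>i<M. c i * t ^ i)" for t
  define R where "R t = phi t - P t" for t
  have Rb: "\<bar>R t\<bar> \<le> K * h ^ M" if t: "t \<in> {0..h}" for t
  proof -
    have "\<bar>R t\<bar> \<le> D * t ^ M / fact M" using c t Ds0 unfolding R_def P_def by auto
    also have "\<dots> \<le> \<bar>D\<bar> * h ^ M / fact M"
      using t by (intro divide_right_mono mult_mono power_mono) auto
    finally show ?thesis unfolding K_def by simp
  qed
  define p where "p = (\<Sum>i<M. monom (c i * h ^ i) i)"
  have pp: "poly p x = P (h * x)" for x
    unfolding p_def P_def poly_sum poly_monom by (simp add: power_mult_distrib mult.assoc)
  have dp: "degree p < M"
  proof -
    have "degree p \<le> M - 1" unfolding p_def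
      by (rule degree_sum_le) (auto intro: order_trans[OF degree_monom_le])
    then show ?thesis using M1 by linarith
  qed
  have exact: "P (h * x) = (\<Sum>m=1..M. lagr M xi m x * P (xi m * h))" for x
    using lagr_exact[OF nodes dp, of x] unfolding pp by (simp add: mult.commute)
  have ftc: "((\<lambda>x. phi (h * x) * h) has_integral (y (h * b) - y (h * a))) {a..b}"
  proof (rule fundamental_theorem_of_calculus[OF ab(2)])
    fix x assume x: "x \<in> {a..b}"
    have img: "(\<lambda>x. h * x) ` {a..b} \<subseteq> {0..h}"
      using ab h by (auto intro: mult_left_le mult_nonneg_nonneg)
    have hx: "h * x \<in> {0..h}" using img imageI[OF x, of "\<lambda>x. h * x"] by blast
    have d1: "(y has_real_derivative phi (h * x)) (at (h * x) within ((\<lambda>x. h * x) ` {a..b}))"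
      using yd hx img by (auto intro: DERIV_subset)
    have d2: "((\<lambda>x. h * x) has_real_derivative h) (at x within {a..b})"
      by (rule derivative_eq_intros refl | simp)+
    have "(y \<circ> (\<lambda>x. h * x) has_real_derivative phi (h * x) * h) (at x within {a..b})"
      by (rule DERIV_image_chain[OF d1 d2])
    then show "((\<lambda>x. y (h * x)) has_vector_derivative phi (h * x) * h) (at x within {a..b})"
      by (simp add: has_real_derivative_iff_has_vector_derivative o_def)
  qed
  have quad: "((\<lambda>x. h * (\<Sum>m=1..M. lagr M xi m x * phi (xi m * h))) has_integral
                h * (\<Sum>m=1..M. qw M xi n m * phi (xi m * h))) {a..b}"
  proof -
    have "(lagr M xi m has_integral qw M xi n m) {a..b}" for m
      unfolding qw_def a_def[symmetric] b_def[symmetric]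
      by (rule integrable_integral integrable_continuous_interval lagr_cont)+
    then show ?thesis
      by (intro has_integral_mult_right has_integral_sum has_integral_mult_left) auto
  qed
  have dif: "((\<lambda>x. phi (h * x) * h - h * (\<Sum>m=1..M. lagr M xi m x * phi (xi m * h))) has_integral
       (y (h * b) - y (h * a) - h * (\<Sum>m=1..M. qw M xi n m * phi (xi m * h)))) {a..b}"
    by (rule has_integral_diff[OF ftc quad])
  have Kh: "0 \<le> K * h ^ M" unfolding K_def using h by simp
  have pw: "norm (phi (h * x) * h - h * (\<Sum>m=1..M. lagr M xi m x * phi (xi m * h)))
              \<le> h * (K * h ^ M * (1 + lbsum M xi))" if x: "x \<in> {a..b}" for x
  proof -
    have x01: "x \<in> {0..1}" using x ab by auto
    have hx: "h * x \<in> {0..h}" using x01 h by (auto intro: mult_left_le)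
    have hm: "xi m * h \<in> {0..h}" if "m \<in> {1..M}" for m
      using rng[OF that] h by (auto intro: mult_left_le_one_le)
    have Rm: "\<And>m. m \<in> {1..M} \<Longrightarrow> \<bar>R (xi m * h)\<bar> \<le> K * h ^ M" using Rb hm by blast
    have "phi (h * x) * h - h * (\<Sum>m=1..M. lagr M xi m x * phi (xi m * h))
        = h * (R (h * x) - (\<Sum>m=1..M. lagr M xi m x * R (xi m * h)))"
      unfolding R_def using exact[of x]
      by (simp add: algebra_simps sum_subtractf sum_distrib_left)
    also have "norm \<dots> = h * \<bar>R (h * x) - (\<Sum>m=1..M. lagr M xi m x * R (xi m * h))\<bar>"
      using h by (simp add: abs_mult)
    also have "\<bar>R (h * x) - (\<Sum>m=1..M. lagr M xi m x * R (xi m * h))\<bar>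
        \<le> \<bar>R (h * x)\<bar> + (\<Sum>m=1..M. \<bar>lagr M xi m x\<bar> * \<bar>R (xi m * h)\<bar>)"
      by (rule order_trans[OF abs_triangle_ineq4]) (simp add: order_trans[OF sum_abs] abs_mult)
    also have "\<dots> \<le> K * h ^ M + (\<Sum>m=1..M. \<bar>lagr M xi m x\<bar> * (K * h ^ M))"
      using Rm Rb[OF hx] by (intro add_mono sum_mono mult_left_mono) auto
    also have "\<dots> = K * h ^ M * (1 + (\<Sum>m=1..M. \<bar>lagr M xi m x\<bar>))"
      by (simp add: sum_distrib_left sum_distrib_right algebra_simps)
    also have "\<dots> \<le> K * h ^ M * (1 + lbsum M xi)"
      using lagr_sum_bound[OF nodes x01] Kh by (intro mult_left_mono) auto
    finally show ?thesis using h by (simp add: mult_left_mono)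
  qed
  have "norm (y (h * b) - y (h * a) - h * (\<Sum>m=1..M. qw M xi n m * phi (xi m * h)))
          \<le> h * (K * h ^ M * (1 + lbsum M xi)) * Henstock_Kurzweil_Integration.content {a..b}"
    by (rule has_integral_bound_real[OF _ _ dif pw]) (use h Kh lbsum_nonneg[of M xi] in auto)
  also have "\<dots> \<le> h * (K * h ^ M * (1 + lbsum M xi)) * 1"
    using ab h Kh lbsum_nonneg[of M xi] by (intro mult_left_mono) auto
  finally show ?thesis
    unfolding K_def[symmetric] a_def[symmetric] b_def[symmetric]
    by (simp add: mult.commute mult.left_commute mult.assoc)
qed


lemma qw_bound:
  assumes nodes: "valid_nodes M xi" and n: "n \<in> {1..numN M xi}" and m: "m \<in> {1..M}"
  shows "\<bar>qw M xi n m\<bar> \<le> (\<Prod>k\<in>{1..M} - {m}. 1 / \<bar>xi m - xi k\<bar>)"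
proof -
  define a where "a = xiR M xi (n-1)"
  define b where "b = xiR M xi n"
  have ab: "0 \<le> a" "a \<le> b" "b \<le> 1" using xiR_props[OF nodes n] a_def b_def by auto
  have i: "(lagr M xi m has_integral qw M xi n m) {a..b}"
    unfolding qw_def a_def[symmetric] b_def[symmetric]
    by (rule integrable_integral integrable_continuous_interval lagr_cont)+
  have "norm (qw M xi n m) \<le> (\<Prod>k\<in>{1..M} - {m}. 1 / \<bar>xi m - xi k\<bar>) * Henstock_Kurzweil_Integration.content {a..b}"
    by (rule has_integral_bound_real[OF _ _ i, where S="{}"])
       (use lagr_bound[OF nodes m] ab in \<open>auto intro!: prod_nonneg\<close>)
  also have "\<dots> \<le> (\<Prod>k\<in>{1..M} - {m}. 1 / \<bar>xi m - xi k\<bar>) * 1"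
    using ab by (intro mult_left_mono prod_nonneg) auto
  finally show ?thesis by simp
qed

lemma qw_sum_bound:
  assumes nodes: "valid_nodes M xi" and n: "n \<in> {1..numN M xi}" and X: "X \<ge> 0"
  shows "(\<Sum>m=1..M. \<bar>qw M xi n m\<bar> * X) \<le> lbsum M xi * X"
  unfolding lbsum_def sum_distrib_right
  using X by (intro sum_mono mult_right_mono qw_bound[OF nodes n]) auto

theorem corollary2:
  fixes M :: nat and xi :: "nat \<Rightarrow> real" and L D :: real
  assumes nodes: "valid_nodes M xi"
  shows "\<exists>C1 C2 :: real. \<forall>(h::real) (f::real \<Rightarrow> real) (y::real \<Rightarrow> real) (y0::real) (eta0::real)
      (u::nat \<Rightarrow> real) (g::nat \<Rightarrow> real) (new::nat \<Rightarrow> real).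
    h > 0 \<longrightarrow>
    (\<forall>a b. \<bar>f a - f b\<bar> \<le> L * \<bar>a - b\<bar>) \<longrightarrow>
    y 0 = y0 \<longrightarrow>
    (\<forall>t\<in>{0..h}. (y has_real_derivative f (y t)) (at t within {0..h})) \<longrightarrow>
    CM_bounded M (\<lambda>t. f (y t)) 0 h D \<longrightarrow>
    h < 1 / (2 * L) \<longrightarrow>
    (\<forall>n\<in>{1..numN M xi}. \<forall>m\<in>{1..M}. xiR M xi n = xi m \<longrightarrow> g n = u m) \<longrightarrow>
    new 0 = eta0 \<longrightarrow>
    (\<forall>n\<in>{1..numN M xi}.
        new n = new (n - 1)
          + (xiR M xi n - xiR M xi (n - 1)) * h * (f (new n) - f (g n))
          + h * (\<Sum>m=1..M. qw M xi n m * f (u m))) \<longrightarrow>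
    (\<forall>n\<in>{1..numN M xi}.
        \<bar>new n - y (xiR M xi n * h)\<bar>
          \<le> exp (2 * real (numN M xi) * h * L) * \<bar>eta0 - y0\<bar>
            + C1 * h * max (Max ((\<lambda>m. \<bar>u m - y (xi m * h)\<bar>) ` {1..M}))
                           (Max ((\<lambda>n. \<bar>g n - y (xiR M xi n * h)\<bar>) ` {1..numN M xi}))
            + C2 * h ^ (M + 1))"
proof -
  define B where "B = lbsum M xi"
  define T where "T = \<bar>D\<bar> / fact M * (1 + B)"
  define C1 where "C1 = real (numN M xi) * exp (real (numN M xi)) * L * (1 + B)"
  define C2 where "C2 = real (numN M xi) * exp (real (numN M xi)) * T"
  have B0: "B \<ge> 0" unfolding B_def by (rule lbsum_nonneg)
  have T0: "T \<ge> 0" unfolding T_def using B0 by simp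
  have M1: "M \<ge> 1" using nodes unfolding valid_nodes_def by auto
  show ?thesis
  proof (rule exI[of _ C1], rule exI[of _ C2], intro allI impI ballI)
    fix h f y y0 eta0 u g new n
    assume h: "h > 0" and lip: "\<forall>a b. \<bar>f a - f b\<bar> \<le> L * \<bar>a - b\<bar>" and y0: "y 0 = y0"
      and yd: "\<forall>t\<in>{0..h}. (y has_real_derivative f (y t)) (at t within {0..h})"
      and CM: "CM_bounded M (\<lambda>t. f (y t)) 0 h D" and hL: "h < 1 / (2 * L)"
      and new0: "new 0 = eta0"
      and rec: "\<forall>n\<in>{1..numN M xi}.
        new n = new (n - 1)
          + (xiR M xi n - xiR M xi (n - 1)) * h * (f (new n) - f (g n))
          + h * (\<Sum>m=1..M. qw M xi n m * f (u m))"
      and n: "n \<in> {1..numN M xi}"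
    define N where "N = numN M xi"
    define U where "U = Max ((\<lambda>m. \<bar>u m - y (xi m * h)\<bar>) ` {1..M})"
    define G where "G = Max ((\<lambda>n. \<bar>g n - y (xiR M xi n * h)\<bar>) ` {1..numN M xi})"
    define eps where "eps = max U G"
    have Lpos: "L > 0"
    proof (rule ccontr)
      assume "\<not> L > 0"
      then have "1 / (2 * L) \<le> 0" by (simp add: divide_le_0_iff)
      then show False using h hL by linarith
    qed
    have hL2: "h * L \<le> 1 / 2" using hL Lpos by (simp add: field_simps)
    have hL0: "0 \<le> h * L" using h Lpos by simp
    have uU: "\<bar>u m - y (xi m * h)\<bar> \<le> eps" if "m \<in> {1..M}" for m
      unfolding eps_def U_def using that by (intro max.coboundedI1 Max_ge) auto
    have gG: "\<bar>g k - y (xiR M xi k * h)\<bar> \<le> eps" if "k \<in> {1..N}" for k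
      unfolding eps_def G_def using that N_def by (intro max.coboundedI2 Max_ge) auto
    have eps0: "eps \<ge> 0" using uU[of 1] M1 by (auto intro: order_trans[OF abs_ge_zero])
    define e where "e k = new k - y (xiR M xi k * h)" for k
    define q where "q = exp (2 * h * L)"
    define beta where "beta = h * L * (1 + B) * eps + T * h ^ (M + 1)"
    have beta0: "beta \<ge> 0" unfolding beta_def using hL0 B0 eps0 T0 h by simp
    have q1: "q \<ge> 1" unfolding q_def using hL0 by (simp add: mult_ac)
    have q1L: "1 \<le> q * (1 - h * L)"
    proof -
      have "1 + 2 * (h * L) \<le> q" unfolding q_def using exp_ge_add_one_self[of "2 * h * L"] by (simp add: mult.assoc)
      then have "(1 + 2 * (h * L)) * (1 - h * L) \<le> q * (1 - h * L)"
        using hL2 by (intro mult_right_mono) auto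
      moreover have "0 \<le> (h * L) * (1 - 2 * (h * L))" using hL0 hL2 by simp
      ultimately show ?thesis by (simp add: algebra_simps)
    qed
    have step: "\<bar>e k\<bar> \<le> q * (\<bar>e (k - 1)\<bar> + beta)" if k: "k \<in> {1..N}" for k
    proof -
      have kN: "k \<in> {1..numN M xi}" using k N_def by simp
      define ck where "ck = (xiR M xi k - xiR M xi (k - 1)) * h"
      have ck: "0 \<le> ck" "ck \<le> h" using xiR_props[OF nodes kN] h unfolding ck_def
        by (auto intro: mult_left_le_one_le)
      define Y where "Y j = y (xiR M xi j * h)" for j
      define tau where "tau = Y k - Y (k - 1) - h * (\<Sum>m=1..M. qw M xi k m * f (y (xi m * h)))"
      have loc: "\<bar>tau\<bar> \<le> T * h ^ (M + 1)"
        using local_err[OF nodes kN h yd CM] unfolding tau_def Y_def T_def B_def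
        by (simp add: mult_ac)
      have rk: "new k = new (k - 1) + ck * (f (new k) - f (g k)) + h * (\<Sum>m=1..M. qw M xi k m * f (u m))"
        using rec kN unfolding ck_def by simp
      have eq: "e k = e (k - 1) + ck * (f (new k) - f (g k))
                  + h * (\<Sum>m=1..M. qw M xi k m * (f (u m) - f (y (xi m * h)))) - tau"
      proof -
        have hs: "h * (\<Sum>m=1..M. qw M xi k m * (f (u m) - f (y (xi m * h))))
           = h * (\<Sum>m=1..M. qw M xi k m * f (u m)) - h * (\<Sum>m=1..M. qw M xi k m * f (y (xi m * h)))"
          by (simp add: right_diff_distrib sum_subtractf)
        show ?thesis unfolding e_def tau_def Y_def
          using rk hs by linarith
      qed
      have t1: "\<bar>f (new k) - f (g k)\<bar> \<le> L * \<bar>e k\<bar> + L * eps"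
      proof -
        have "\<bar>f (new k) - f (Y k)\<bar> \<le> L * \<bar>e k\<bar>" using lip unfolding e_def Y_def by blast
        moreover have "\<bar>f (Y k) - f (g k)\<bar> \<le> L * \<bar>Y k - g k\<bar>" using lip by blast
        moreover have "\<bar>Y k - g k\<bar> \<le> eps" using gG[OF k] unfolding Y_def by (simp add: abs_minus_commute)
        ultimately have "\<bar>f (new k) - f (Y k)\<bar> + \<bar>f (Y k) - f (g k)\<bar> \<le> L * \<bar>e k\<bar> + L * eps"
          using mult_left_mono[of "\<bar>Y k - g k\<bar>" eps L] Lpos by linarith
        then show ?thesis using abs_triangle_ineq[of "f (new k) - f (Y k)" "f (Y k) - f (g k)"] by simp
      qed
      have t1': "\<bar>ck * (f (new k) - f (g k))\<bar> \<le> h * (L * \<bar>e k\<bar> + L * eps)"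
      proof -
        have "\<bar>ck * (f (new k) - f (g k))\<bar> = ck * \<bar>f (new k) - f (g k)\<bar>" using ck by (simp add: abs_mult)
        also have "\<dots> \<le> h * (L * \<bar>e k\<bar> + L * eps)"
          using t1 ck by (intro mult_mono) (auto intro: order_trans[OF abs_ge_zero])
        finally show ?thesis .
      qed
      have t2: "\<bar>h * (\<Sum>m=1..M. qw M xi k m * (f (u m) - f (y (xi m * h))))\<bar> \<le> h * (B * (L * eps))"
      proof -
        have "\<bar>\<Sum>m=1..M. qw M xi k m * (f (u m) - f (y (xi m * h)))\<bar>
              \<le> (\<Sum>m=1..M. \<bar>qw M xi k m\<bar> * (L * eps))"
        proof (rule order_trans[OF sum_abs], rule sum_mono)
          fix m assume m: "m \<in> {1..M}"
          have "\<bar>f (u m) - f (y (xi m * h))\<bar> \<le> L * eps"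
          proof -
            have "\<bar>f (u m) - f (y (xi m * h))\<bar> \<le> L * \<bar>u m - y (xi m * h)\<bar>" using lip by blast
            also have "\<dots> \<le> L * eps" using uU[OF m] Lpos by (intro mult_left_mono) auto
            finally show ?thesis .
          qed
          then show "\<bar>qw M xi k m * (f (u m) - f (y (xi m * h)))\<bar> \<le> \<bar>qw M xi k m\<bar> * (L * eps)"
            by (simp add: abs_mult mult_left_mono)
        qed
        also have "\<dots> \<le> B * (L * eps)"
          unfolding B_def using Lpos eps0 by (intro qw_sum_bound[OF nodes kN]) simp
        finally show ?thesis using h by (simp add: abs_mult)
      qed
      have "\<bar>e k\<bar> \<le> \<bar>e (k - 1)\<bar> + h * (L * \<bar>e k\<bar> + L * eps) + h * (B * (L * eps)) + T * h ^ (M + 1)"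
        using eq t1' t2 loc by linarith
      then have "(1 - h * L) * \<bar>e k\<bar> \<le> \<bar>e (k - 1)\<bar> + beta"
        unfolding beta_def by (simp add: algebra_simps)
      then have "q * ((1 - h * L) * \<bar>e k\<bar>) \<le> q * (\<bar>e (k - 1)\<bar> + beta)"
        using q1 by (intro mult_left_mono) auto
      moreover have "\<bar>e k\<bar> \<le> q * (1 - h * L) * \<bar>e k\<bar>"
        using q1L mult_right_mono[OF q1L abs_ge_zero[of "e k"]] by simp
      ultimately show ?thesis by (simp add: mult.assoc)
    qed
    have ind: "k \<le> N \<Longrightarrow> \<bar>e k\<bar> \<le> q ^ k * \<bar>e 0\<bar> + real k * q ^ k * beta" for k
    proof (induction k)
      case 0
      then show ?case by simp
    next
      case (Suc k)
      have "\<bar>e (Suc k)\<bar> \<le> q * (\<bar>e k\<bar> + beta)" using step[of "Suc k"] Suc.prems by simp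
      also have "\<dots> \<le> q * (q ^ k * \<bar>e 0\<bar> + real k * q ^ k * beta + beta)"
        using Suc q1 by (intro mult_left_mono) auto
      also have "\<dots> = q ^ Suc k * \<bar>e 0\<bar> + real k * q ^ Suc k * beta + q * beta"
        by (simp add: algebra_simps)
      also have "q * beta \<le> q ^ Suc k * beta"
        using q1 beta0 by (intro mult_right_mono) (auto intro: order_trans[OF _ power_increasing[of 1 "Suc k" q]])
      finally show ?case by (simp add: algebra_simps)
    qed
    have nN: "n \<le> N" "1 \<le> n" using n N_def by auto
    have qN: "q ^ n \<le> exp (2 * real N * h * L)"
    proof -
      have "q ^ n \<le> q ^ N" using q1 nN by (intro power_increasing) auto
      also have "\<dots> = exp (2 * real N * h * L)" unfolding q_def
        by (simp add: exp_of_nat_mult[symmetric] mult_ac)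
      finally show ?thesis .
    qed
    have qNe: "exp (2 * real N * h * L) \<le> exp (real N)"
    proof -
      have "2 * real N * h * L = real N * (2 * (h * L))" by (simp add: mult_ac)
      also have "\<dots> \<le> real N * 1" using hL2 by (intro mult_left_mono) auto
      finally show ?thesis by simp
    qed
    have e0: "e 0 = eta0 - y0" unfolding e_def using new0 y0 by (simp add: xiR_def)
    have "\<bar>e n\<bar> \<le> q ^ n * \<bar>e 0\<bar> + real n * q ^ n * beta" using ind nN by simp
    also have "\<dots> \<le> exp (2 * real N * h * L) * \<bar>e 0\<bar> + real N * exp (real N) * beta"
      using qN qNe nN beta0 q1
      by (intro add_mono mult_right_mono mult_mono) (auto intro: order_trans)
    also have "real N * exp (real N) * beta = C1 * h * eps + C2 * h ^ (M + 1)"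
      unfolding beta_def C1_def C2_def N_def by (simp add: algebra_simps)
    finally have fin: "\<bar>e n\<bar> \<le> exp (2 * real N * h * L) * \<bar>e 0\<bar> + (C1 * h * eps + C2 * h ^ (M + 1))" .
    have epsE: "max (Max ((\<lambda>m. \<bar>u m - y (xi m * h)\<bar>) ` {1..M}))
                           (Max ((\<lambda>n. \<bar>g n - y (xiR M xi n * h)\<bar>) ` {1..numN M xi})) = eps"
      unfolding eps_def U_def G_def by (rule refl)
    show "\<bar>new n - y (xiR M xi n * h)\<bar>
          \<le> exp (2 * real (numN M xi) * h * L) * \<bar>eta0 - y0\<bar>
            + C1 * h * max (Max ((\<lambda>m. \<bar>u m - y (xi m * h)\<bar>) ` {1..M}))
                           (Max ((\<lambda>n. \<bar>g n - y (xiR M xi n * h)\<bar>) ` {1..numN M xi}))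
            + C2 * h ^ (M + 1)"
      unfolding epsE e_def[symmetric] using fin[unfolded e0 N_def] by linarith
  qed
qed
end
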